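(* Let $\mathcal X$ be a finite multi-set of real symmetric $2\times2$ matrices. Let $\lambda_1$ be (one of) the largest eigenvalue(s) of $\mathcal X$, $u_1$ the eigenvector associated with $\lambda_1$ and $v_1\perp u_1$ the minor eigenvector of the same matrix of $\mathcal X$, and let $\lambda_2\le\lambda_1$ be the next largest eigenvalue of $\mathcal X$ (the largest element of the eigenvalue multi-set after removing one occurrence of $\lambda_1$). Then $$\mathrm{Sup}_{\mathrm{RLE}}(\mathcal X)=\begin{cases}\lambda_1u_1u_1^{\mathsf T}+\lambda_2v_1v_1^{\mathsf T},&\text{if }\lambda_1\text{ is unique},\\ \lambda_1I,&\text{otherwise}.\end{cases}$$
   Context: $I$ is the $2\times2$ identity. "The eigenvalues of $\mathcal X$" is the multi-set of both eigenvalues of every matrix of $\mathcal X$; unique means occurring exactly once. $\mathrm{Sup}_{\mathrm{LE}}(\mathcal X):=\lim_{m\to\infty}\frac1m\log\sum_{X\in\mathcal X}\exp(mX)$. Write $X_i=\lambda_iu_iu_i^{\mathsf T}+\mu_iv_iv_i^{\mathsf T}$ (spectral form, $\lambda_i\ge\mu_i$, orthonormal $u_i,v_i$). The multi-set of bases $\{\{u_i,v_i\}\}_i$ is generic if for no $i\neq j$ the vector $u_i$ is aligned (equal up to sign) with $u_j$. Families $\mathcal X^{(\delta)}=\{X_1^{(\delta)},\dots,X_n^{(\delta)}\}$ converge planar to $\mathcal X$ if $X_i^{(\delta)}\to X_i$ as $\delta\to0$ and $X_i^{(\delta)}$ has the same eigenvalues as $X_i$ for all $i,\delta$. The relaxed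 log-exp-supremum is $\mathrm{Sup}_{\mathrm{RLE}}(\mathcal X):=\mathrm{Sup}_{\mathrm{LE}}(\mathcal X)$ if the bases of $\mathcal X$ are generic, and otherwise $\mathrm{Sup}_{\mathrm{RLE}}(\mathcal X):=\lim_{\delta\to0}\mathrm{Sup}_{\mathrm{LE}}(\mathcal X^{(\delta)})$ over families $\mathcal X^{(\delta)}$ converging planar to $\mathcal X$ with generic bases. *)

theory Defs
  imports "HOL-Analysis.Analysis"
begin

type_synonym mat2 = "real^2^2"

definition mat2_pow :: "mat2 \<Rightarrow> nat \<Rightarrow> mat2" where
  "mat2_pow A k = ((\<lambda>B. A ** B) ^^ k) (mat 1)"

definition mexp :: "mat2 \<Rightarrow> mat2" where
  "mexp A = (\<Sum>k. (1 / fact k) *\<^sub>R mat2_pow A k)"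

text \<open>Matrix logarithm: the unique real symmetric logarithm (of a symmetric positive definite matrix).\<close>
definition mlog :: "mat2 \<Rightarrow> mat2" where
  "mlog A = (THE L. transpose L = L \<and> mexp L = A)"

definition outer :: "real^2 \<Rightarrow> mat2" where
  "outer w = (\<chi> i j. w $ i * w $ j)"

definition spectral :: "mat2 \<Rightarrow> real \<Rightarrow> real \<Rightarrow> real^2 \<Rightarrow> real^2 \<Rightarrow> bool" where
  "spectral A l m u v \<longleftrightarrow> m \<le> l \<and> norm u = 1 \<and> norm v = 1 \<and> inner u v = 0 \<and>
     A = l *\<^sub>R outer u + m *\<^sub>R outer v"

definition aligned :: "real^2 \<Rightarrow> real^2 \<Rightarrow> bool" where
  "aligned a b \<longleftrightarrow> a = b \<or> a = - b"

definition generic_bases :: "nat \<Rightarrow> (nat \<Rightarrow> real^2) \<Rightarrow> bool" where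
  "generic_bases n u \<longleftrightarrow> (\<forall>i<n. \<forall>j<n. i \<noteq> j \<longrightarrow> \<not> aligned (u i) (u j))"

definition has_generic_bases :: "nat \<Rightarrow> (nat \<Rightarrow> mat2) \<Rightarrow> bool" where
  "has_generic_bases n X \<longleftrightarrow>
     (\<exists>l m u v. (\<forall>i<n. spectral (X i) (l i) (m i) (u i) (v i)) \<and> generic_bases n u)"

definition same_eigs :: "mat2 \<Rightarrow> mat2 \<Rightarrow> bool" where
  "same_eigs A B \<longleftrightarrow> (\<exists>l m u v u' v'. spectral A l m u v \<and> spectral B l m u' v')"

definition has_Sup_LE :: "nat \<Rightarrow> (nat \<Rightarrow> mat2) \<Rightarrow> mat2 \<Rightarrow> bool" where
  "has_Sup_LE n X S \<longleftrightarrow>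
     ((\<lambda>t::real. (1 / t) *\<^sub>R mlog (\<Sum>i<n. mexp (t *\<^sub>R X i))) \<longlongrightarrow> S) at_top"

definition has_Sup_RLE :: "nat \<Rightarrow> (nat \<Rightarrow> mat2) \<Rightarrow> mat2 \<Rightarrow> bool" where
  "has_Sup_RLE n X S \<longleftrightarrow>
     (if has_generic_bases n X then has_Sup_LE n X S
      else (\<forall>Xd :: real \<Rightarrow> nat \<Rightarrow> mat2.
              (\<forall>i<n. ((\<lambda>d. Xd d i) \<longlongrightarrow> X i) (at_right 0)) \<and>
              (\<forall>d>0. \<forall>i<n. same_eigs (Xd d i) (X i)) \<and>
              (\<forall>d>0. has_generic_bases n (Xd d))
              \<longrightarrow> (\<exists>S'. (\<forall>d>0. has_Sup_LE n (Xd d) (S' d)) \<and> (S' \<longlongrightarrow> S) (at_right 0))))"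

end

theory Submission imports Defs "HOL-Real_Asymp.Real_Asymp" begin


lemma mat2_eq_iff: "(A::mat2) = B \<longleftrightarrow> A$1$1 = B$1$1 \<and> A$1$2 = B$1$2 \<and> A$2$1 = B$2$1 \<and> A$2$2 = B$2$2"
  by (auto simp: vec_eq_iff forall_2)

lemma vec2_eq_iff: "(x::real^2) = y \<longleftrightarrow> x$1 = y$1 \<and> x$2 = y$2"
  by (auto simp: vec_eq_iff forall_2)

lemma inner2: "inner (x::real^2) y = x$1*y$1 + x$2*y$2"
  by (simp add: inner_vec_def sum_2)

lemma norm2_sq: "(norm (x::real^2))^2 = (x$1)^2 + (x$2)^2"
  unfolding power2_norm_eq_inner inner2 by (simp add: power2_eq_square)

lemma unit2: "norm (x::real^2) = 1 \<longleftrightarrow> (x$1)^2 + (x$2)^2 = 1"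
proof -
  have "norm x = sqrt ((x$1)^2 + (x$2)^2)"
    using real_sqrt_unique[OF norm2_sq norm_ge_zero] by simp
  then show ?thesis by simp
qed

lemma onb_alg:
  fixes a b c d :: real
  assumes h: "a^2 + b^2 = 1" "c^2 + d^2 = 1" "a*c + b*d = 0"
  shows "a^2 + c^2 = 1" "a*b + c*d = 0" "b^2 + d^2 = 1"
proof -
  define r where "r = a*d - b*c"
  have ec: "c*(a^2+b^2) = a*(a*c+b*d) - r*b" unfolding r_def by (simp add: algebra_simps power2_eq_square)
  have c: "c = - r * b" using ec unfolding h(1) h(3) by simp
  have ed: "d*(a^2+b^2) = b*(a*c+b*d) + r*a" unfolding r_def by (simp add: algebra_simps power2_eq_square)
  have d: "d = r * a" using ed unfolding h(1) h(3) by simp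
  have "r^2 = 1"
  proof -
    have "r^2 = r^2 * (a^2+b^2)" using h by simp
    also have "... = c^2 + d^2" using c d by (simp add: algebra_simps power2_eq_square)
    finally show ?thesis using h by simp
  qed
  have c2: "c^2 = b^2" unfolding c using \<open>r^2=1\<close> by (simp add: power_mult_distrib)
  have d2: "d^2 = a^2" unfolding d using \<open>r^2=1\<close> by (simp add: power_mult_distrib)
  have cd: "c*d = - (a*b)" unfolding c d
  proof -
    have "- r * b * (r * a) = - (r^2 * (a*b))" by (simp add: power2_eq_square)
    then show "- r * b * (r * a) = - (a*b)" using \<open>r^2=1\<close> by simp
  qed
  show "a^2 + c^2 = 1" using h(1) by (simp add: c2)
  show "b^2 + d^2 = 1" using h(1) by (simp add: d2 add.commute)
  show "a*b + c*d = 0" by (simp add: cd)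
qed

lemma onb_rows:
  fixes u v :: "real^2"
  assumes "norm u = 1" "norm v = 1" "inner u v = 0"
  shows "(u$1)^2 + (v$1)^2 = 1" "u$1 * u$2 + v$1 * v$2 = 0" "(u$2)^2 + (v$2)^2 = 1"
proof -
  have "(u$1)^2 + (u$2)^2 = 1" "(v$1)^2 + (v$2)^2 = 1" "u$1 * v$1 + u$2 * v$2 = 0"
    using assms by (simp_all only: unit2 inner2)
  from onb_alg[OF this] show "(u$1)^2 + (v$1)^2 = 1" "u$1 * u$2 + v$1 * v$2 = 0" "(u$2)^2 + (v$2)^2 = 1" .
qed


lemma mm_add_r: "((A::mat2) + B) ** (C::mat2) = A ** C + B ** C"
  unfolding mat2_eq_iff by (simp add: matrix_matrix_mult_def sum_2 algebra_simps)
lemma mm_add_l: "(A::mat2) ** ((B::mat2) + C) = A ** B + A ** C"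
  unfolding mat2_eq_iff by (simp add: matrix_matrix_mult_def sum_2 algebra_simps)
lemma mm_scale_l: "(c *\<^sub>R (A::mat2)) ** (B::mat2) = c *\<^sub>R (A ** B)"
  unfolding mat2_eq_iff by (simp add: matrix_matrix_mult_def sum_2 algebra_simps)
lemma mm_scale_r: "(A::mat2) ** (c *\<^sub>R (B::mat2)) = c *\<^sub>R (A ** B)"
  unfolding mat2_eq_iff by (simp add: matrix_matrix_mult_def sum_2 algebra_simps)
lemma tr_add: "transpose ((A::mat2) + B) = transpose A + transpose B"
  by (simp add: mat2_eq_iff transpose_def)

lemma outer_nth[simp]: "outer w $ i $ j = w$i * w$j"
  by (simp add: outer_def)

lemma mat1_nth: "(mat 1 :: mat2) $ i $ j = (if i = j then 1 else 0)"
  by (simp add: mat_def)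

lemma onb_sum:
  assumes "norm u = 1" "norm v = 1" "inner u v = 0"
  shows "outer u + outer v = mat 1"
  using onb_rows[OF assms] by (simp add: mat2_eq_iff mat1_nth power2_eq_square mult.commute)

lemma outer_mult: "outer u ** outer w = (inner u w) *\<^sub>R (\<chi> i j. u$i * w$j)"
  unfolding mat2_eq_iff by (simp add: matrix_matrix_mult_def sum_2 inner2 algebra_simps)

lemma outer_idem: "norm u = 1 \<Longrightarrow> outer u ** outer u = outer u"
proof -
  assume "norm u = 1"
  then have "inner u u = 1" by (simp add: norm_eq_1)
  then show ?thesis unfolding outer_mult mat2_eq_iff by simp
qed

lemma outer_orth: "inner u v = 0 \<Longrightarrow> outer u ** outer v = 0"
  by (simp add: outer_mult)

lemma outer_orth': "inner u v = 0 \<Longrightarrow> outer v ** outer u = 0"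
  by (simp add: outer_mult inner_commute)

lemma outer_transpose: "transpose (outer u) = outer u"
  by (simp add: mat2_eq_iff transpose_def mult.commute)

lemma outer_mv: "outer u *v x = (inner u x) *\<^sub>R u"
  by (simp add: vec2_eq_iff matrix_vector_mult_def sum_2 inner2 algebra_simps)

lemma outer_qf: "inner x (outer u *v x) = (inner u x)^2"
  by (simp add: outer_mv inner_commute power2_eq_square)

lemma outer_neg[simp]: "outer (- u) = outer u"
  by (simp add: outer_def)

lemma onb_qf:
  fixes u v x :: "real^2"
  assumes "norm u = 1" "norm v = 1" "inner u v = 0"
  shows "(inner u x)^2 + (inner v x)^2 = (norm x)^2"
proof -
  have r: "(u$1)^2 + (v$1)^2 = 1" "u$1 * u$2 + v$1 * v$2 = 0" "(u$2)^2 + (v$2)^2 = 1"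
    using onb_rows[OF assms] by auto
  have "(inner u x)^2 + (inner v x)^2
     = (x$1)^2 * ((u$1)^2 + (v$1)^2) + 2 * (x$1 * x$2) * (u$1 * u$2 + v$1 * v$2) + (x$2)^2 * ((u$2)^2 + (v$2)^2)"
    by (simp add: inner2 power2_eq_square algebra_simps)
  also have "... = (norm x)^2" unfolding r norm2_sq by simp
  finally show ?thesis .
qed

lemma onb_decomp:
  fixes u v x :: "real^2"
  assumes "norm u = 1" "norm v = 1" "inner u v = 0"
  shows "x = (inner u x) *\<^sub>R u + (inner v x) *\<^sub>R v"
proof -
  have "x = mat 1 *v x" by simp
  also have "... = (outer u + outer v) *v x" using onb_sum[OF assms] by simp
  also have "... = (inner u x) *\<^sub>R u + (inner v x) *\<^sub>R v"
    by (simp add: matrix_vector_mult_add_rdistrib outer_mv)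
  finally show ?thesis .
qed

lemma spectral_sym: "spectral A l m u v \<Longrightarrow> transpose A = A"
  by (simp add: spectral_def tr_add transpose_scalar outer_transpose)

lemma spectral_onb: "spectral A l m u v \<Longrightarrow> norm u = 1 \<and> norm v = 1 \<and> inner u v = 0"
  by (simp add: spectral_def)

lemma spectral_pow:
  assumes "spectral A l m u v"
  shows "mat2_pow A k = l^k *\<^sub>R outer u + m^k *\<^sub>R outer v"
proof (induction k)
  case 0
  then show ?case using onb_sum spectral_onb[OF assms] by (simp add: mat2_pow_def)
next
  case (Suc k)
  have o: "norm u = 1" "norm v = 1" "inner u v = 0" using spectral_onb[OF assms] by auto
  have A: "A = l *\<^sub>R outer u + m *\<^sub>R outer v" using assms by (simp add: spectral_def)
  have "mat2_pow A (Suc k) = A ** mat2_pow A k" by (simp add: mat2_pow_def)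
  also have "... = A ** (l^k *\<^sub>R outer u + m^k *\<^sub>R outer v)" using Suc by simp
  also have "... = l^(Suc k) *\<^sub>R outer u + m^(Suc k) *\<^sub>R outer v"
    unfolding A
    by (simp add: mm_add_l mm_add_r mm_scale_l mm_scale_r outer_idem outer_orth outer_orth' o mult.commute)
  finally show ?case .
qed


lemma exp_sums_real: "(\<lambda>k. (x::real)^k / fact k) sums exp x"
  using exp_converges[of x] by (simp add: divide_inverse mult.commute)

lemma spectral_exp:
  assumes "spectral A l m u v"
  shows "mexp A = exp l *\<^sub>R outer u + exp m *\<^sub>R outer v"
proof -
  have eq: "(\<lambda>k. (1 / fact k) *\<^sub>R mat2_pow A k)
      = (\<lambda>k. (l^k / fact k) *\<^sub>R outer u + (m^k / fact k) *\<^sub>R outer v)"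
    by (rule ext) (simp add: spectral_pow[OF assms] scaleR_add_right)
  have "(\<lambda>k. (l^k / fact k) *\<^sub>R outer u + (m^k / fact k) *\<^sub>R outer v) sums
        (exp l *\<^sub>R outer u + exp m *\<^sub>R outer v)"
    by (intro sums_add sums_scaleR_left exp_sums_real)
  then show ?thesis unfolding mexp_def eq by (rule sums_unique[symmetric])
qed

lemma mv_scale: "((c::real) *\<^sub>R (M::mat2)) *v x = c *\<^sub>R (M *v x)"
  unfolding vec2_eq_iff by (simp add: matrix_vector_mult_def sum_2 algebra_simps)

lemma spectral_qf:
  assumes "spectral A l m u v"
  shows "inner x (A *v x) = l * (inner u x)^2 + m * (inner v x)^2"
  using assms unfolding spectral_def
  by (simp add: matrix_vector_mult_add_rdistrib mv_scale inner_add_right outer_qf)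

lemma spectral_qf_bounds:
  assumes "spectral A l m u v" "norm x = 1"
  shows "inner x (A *v x) \<le> l" "m \<le> inner x (A *v x)"
proof -
  have o: "norm u = 1" "norm v = 1" "inner u v = 0" using spectral_onb[OF assms(1)] by auto
  have s: "(inner u x)^2 + (inner v x)^2 = 1" using onb_qf[OF o, of x] assms(2) by simp
  have ml: "m \<le> l" using assms(1) by (simp add: spectral_def)
  have q: "inner x (A *v x) = l * (inner u x)^2 + m * (inner v x)^2" by (rule spectral_qf[OF assms(1)])
  have ll: "l * (inner u x)^2 + l * (inner v x)^2 = l" using s by (simp only: distrib_left[symmetric] mult_1_right)
  have mm: "m * (inner u x)^2 + m * (inner v x)^2 = m" using s by (simp only: distrib_left[symmetric] mult_1_right)
  have "m * (inner v x)^2 \<le> l * (inner v x)^2" using ml by (simp add: mult_right_mono)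
  then show "inner x (A *v x) \<le> l" using q ll by linarith
  have "m * (inner u x)^2 \<le> l * (inner u x)^2" using ml by (simp add: mult_right_mono)
  then show "m \<le> inner x (A *v x)" using q mm by linarith
qed

lemma spectral_qf_u:
  assumes "spectral A l m u v"
  shows "inner u (A *v u) = l" "inner v (A *v v) = m"
proof -
  have o: "norm u = 1" "norm v = 1" "inner u v = 0" using spectral_onb[OF assms(1)] by auto
  have uu: "inner u u = 1" "inner v v = 1" using o by (simp_all add: norm_eq_1)
  show "inner u (A *v u) = l" "inner v (A *v v) = m"
    using spectral_qf[OF assms, of u] spectral_qf[OF assms, of v] uu o(3) by (simp_all add: inner_commute)
qed

lemma spectral_unique:
  assumes "spectral A l m u v" "spectral A l' m' u' v'"
  shows "l = l' \<and> m = m'"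
proof -
  have n: "norm u = 1" "norm v = 1" "norm u' = 1" "norm v' = 1"
    using assms by (auto simp: spectral_def)
  have "l \<le> l'" using spectral_qf_bounds(1)[OF assms(2) n(1)] spectral_qf_u(1)[OF assms(1)] by simp
  moreover have "l' \<le> l" using spectral_qf_bounds(1)[OF assms(1) n(3)] spectral_qf_u(1)[OF assms(2)] by simp
  moreover have "m' \<le> m" using spectral_qf_bounds(2)[OF assms(2) n(2)] spectral_qf_u(2)[OF assms(1)] by simp
  moreover have "m \<le> m'" using spectral_qf_bounds(2)[OF assms(1) n(4)] spectral_qf_u(2)[OF assms(2)] by simp
  ultimately show ?thesis by simp
qed

lemma spectral_proj:
  assumes "spectral A l m u v" "m < l"
  shows "outer u = (1 / (l - m)) *\<^sub>R (A - m *\<^sub>R mat 1)"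
proof -
  have o: "norm u = 1" "norm v = 1" "inner u v = 0" using spectral_onb[OF assms(1)] by auto
  have A: "A = l *\<^sub>R outer u + m *\<^sub>R outer v" using assms(1) by (simp add: spectral_def)
  have "A - m *\<^sub>R mat 1 = (l *\<^sub>R outer u + m *\<^sub>R outer v) - (m *\<^sub>R outer u + m *\<^sub>R outer v)"
    unfolding A onb_sum[OF o, symmetric] by (simp add: scaleR_add_right)
  also have "... = (l - m) *\<^sub>R outer u" by (simp add: scaleR_diff_left)
  finally have "A - m *\<^sub>R mat 1 = (l - m) *\<^sub>R outer u" .
  then show ?thesis using assms(2) by simp
qed

lemma spectral_scale:
  assumes "spectral A l m u v" "0 \<le> c"
  shows "spectral (c *\<^sub>R A) (c * l) (c * m) u v"
  using assms by (auto simp: spectral_def mult_left_mono scaleR_add_right)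


lemma spec_alg:
  fixes a c d l m N2 :: real
  assumes K: "(l - a) * (l - d) = c^2" and md: "m = a + d - l" and N: "N2 = c^2 + (l-a)^2" "N2 \<noteq> 0"
  shows "l * (c^2 / N2) + m * ((l-a)^2 / N2) = a"
    "l * (c * (l-a) / N2) + m * (- (l-a) * c / N2) = c"
    "l * ((l-a)^2 / N2) + m * (c^2 / N2) = d"
proof -
  have e1: "l * c^2 + m * (l-a)^2 = a * N2" unfolding N md using K by algebra
  have e2: "l * (c * (l-a)) + m * (- (l-a) * c) = c * N2" unfolding N md using K by algebra
  have e3: "l * (l-a)^2 + m * c^2 = d * N2" unfolding N md using K by algebra
  show "l * (c^2 / N2) + m * ((l-a)^2 / N2) = a" using e1 N(2)
    by (simp add: field_simps)
  have "l * (c * (l-a) / N2) + m * (- (l-a) * c / N2) = (l * (c * (l-a)) + m * (- (l-a) * c)) / N2"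
    by (simp only: add_divide_distrib times_divide_eq_right)
  also have "... = c" unfolding e2 using N(2) by simp
  finally show "l * (c * (l-a) / N2) + m * (- (l-a) * c / N2) = c" .
  show "l * ((l-a)^2 / N2) + m * (c^2 / N2) = d" using e3 N(2)
    by (simp add: field_simps)
qed

lemma sym_entry: "transpose (L::mat2) = L \<Longrightarrow> L$2$1 = L$1$2"
proof -
  assume h: "transpose L = L"
  have "transpose L $ 2 $ 1 = L $ 1 $ 2" by (simp add: transpose_def)
  then show ?thesis using h by simp
qed

lemma spectral_exists:
  assumes "transpose L = (L::mat2)"
  shows "\<exists>l m u v. spectral L l m u v"
proof -
  define a where "a = L$1$1"
  define c where "c = L$1$2"
  define d where "d = L$2$2"
  have c': "L$2$1 = c" using sym_entry[OF assms] unfolding c_def .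
  define e1 :: "real^2" where "e1 = vector [1, 0]"
  define e2 :: "real^2" where "e2 = vector [0, 1]"
  have e: "norm e1 = 1" "norm e2 = 1" "inner e1 e2 = 0" "inner e2 e1 = 0"
    unfolding e1_def e2_def unit2 inner2 by simp_all
  show ?thesis
  proof (cases "c = 0")
    case True
    show ?thesis
    proof (cases "d \<le> a")
      case True
      have "L = a *\<^sub>R outer e1 + d *\<^sub>R outer e2"
        unfolding mat2_eq_iff using c' \<open>c=0\<close> by (simp add: e1_def e2_def a_def d_def c_def)
      then have "spectral L a d e1 e2" unfolding spectral_def using e True by simp
      then show ?thesis by blast
    next
      case False
      have "L = d *\<^sub>R outer e2 + a *\<^sub>R outer e1"
        unfolding mat2_eq_iff using c' \<open>c=0\<close> by (simp add: e1_def e2_def a_def d_def c_def)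
      then have "spectral L d a e2 e1" unfolding spectral_def using e False by simp
      then show ?thesis by blast
    qed
  next
    case False
    define r where "r = sqrt ((a-d)^2/4 + c^2)"
    have r2: "r^2 = (a-d)^2/4 + c^2" unfolding r_def by (simp add: add_nonneg_nonneg)
    have r0: "0 \<le> r" unfolding r_def by simp
    define l where "l = (a+d)/2 + r"
    define m where "m = a + d - l"
    have K: "(l - a) * (l - d) = c^2"
    proof -
      have "(l - a) * (l - d) = r^2 - (a-d)^2/4" unfolding l_def by (simp add: field_simps power2_eq_square)
      then show ?thesis using r2 by simp
    qed
    define N2 where "N2 = c^2 + (l-a)^2"
    have N2pos: "N2 > 0" unfolding N2_def using False by (simp add: add_pos_nonneg)
    define N where "N = sqrt N2"
    have NN: "N * N = N2" "N \<noteq> 0" unfolding N_def using N2pos by simp_all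
    define u :: "real^2" where "u = vector [c / N, (l-a) / N]"
    define v :: "real^2" where "v = vector [- (l-a) / N, c / N]"
    have u1: "u$1 = c / N" and u2: "u$2 = (l-a)/N" and v1: "v$1 = - (l-a) / N" and v2: "v$2 = c / N"
      unfolding u_def v_def by simp_all
    have pr: "u$1 * u$1 = c^2/N2" "u$1 * u$2 = c*(l-a)/N2" "u$2 * u$1 = c*(l-a)/N2" "u$2 * u$2 = (l-a)^2/N2"
      "v$1 * v$1 = (l-a)^2/N2" "v$1 * v$2 = -(l-a)*c/N2" "v$2 * v$1 = -(l-a)*c/N2" "v$2 * v$2 = c^2/N2"
      unfolding u1 u2 v1 v2 NN(1)[symmetric] by (simp_all add: power2_eq_square algebra_simps)
    have uv: "norm u = 1" "norm v = 1" "inner u v = 0"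
    proof -
      have "(u$1)^2 + (u$2)^2 = (c^2 + (l-a)^2) / N2" using pr by (simp add: power2_eq_square add_divide_distrib)
      then have "(u$1)^2 + (u$2)^2 = N2 / N2" by (simp only: N2_def)
      then show "norm u = 1" unfolding unit2 using N2pos by simp
      have "(v$1)^2 + (v$2)^2 = ((l-a)^2 + c^2) / N2" using pr by (simp add: power2_eq_square add_divide_distrib)
      then have "(v$1)^2 + (v$2)^2 = N2 / N2" by (simp only: N2_def add.commute)
      then show "norm v = 1" unfolding unit2 using N2pos by simp
      have "inner u v = c*(l-a)/N2 + (-(l-a)*c/N2)" unfolding inner2 
        unfolding u1 u2 v1 v2 NN(1)[symmetric] by (simp add: algebra_simps)
      also have "... = (c*(l-a) + (-(l-a)*c)) / N2" by (simp only: add_divide_distrib)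
      also have "... = 0" by (simp add: algebra_simps)
      finally show "inner u v = 0" .
    qed
    have alg: "l * (c^2 / N2) + m * ((l-a)^2 / N2) = a"
      "l * (c * (l-a) / N2) + m * (- (l-a) * c / N2) = c"
      "l * ((l-a)^2 / N2) + m * (c^2 / N2) = d"
      using spec_alg[OF K m_def N2_def] N2pos by auto
    have "L = l *\<^sub>R outer u + m *\<^sub>R outer v"
    proof -
      have "(l *\<^sub>R outer u + m *\<^sub>R outer v) $ 1 $ 1 = a" using alg(1) pr by simp
      moreover have "(l *\<^sub>R outer u + m *\<^sub>R outer v) $ 1 $ 2 = c" using alg(2) pr by simp
      moreover have "(l *\<^sub>R outer u + m *\<^sub>R outer v) $ 2 $ 1 = c" using alg(2) pr by simp
      moreover have "(l *\<^sub>R outer u + m *\<^sub>R outer v) $ 2 $ 2 = d" using alg(3) pr by simp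
      ultimately show ?thesis unfolding mat2_eq_iff using c' by (simp add: a_def c_def d_def)
    qed
    moreover have "m \<le> l"
    proof -
      have "m = (a+d)/2 - r" unfolding m_def l_def by (simp add: field_simps)
      then show ?thesis unfolding l_def using r0 by linarith
    qed
    ultimately have "spectral L l m u v" using uv by (simp add: spectral_def)
    then show ?thesis by blast
  qed
qed

lemma mlog_spectral:
  assumes "spectral A a b p q" "0 < b"
  shows "mlog A = ln a *\<^sub>R outer p + ln b *\<^sub>R outer q"
proof -
  have o: "norm p = 1" "norm q = 1" "inner p q = 0" using spectral_onb[OF assms(1)] by auto
  have ba: "b \<le> a" and A: "A = a *\<^sub>R outer p + b *\<^sub>R outer q" using assms(1) by (auto simp: spectral_def)
  have a0: "0 < a" using ba assms(2) by simp
  define L0 where "L0 = ln a *\<^sub>R outer p + ln b *\<^sub>R outer q"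
  have sL0: "spectral L0 (ln a) (ln b) p q" unfolding spectral_def L0_def using o ba assms(2) by simp
  have P: "transpose L0 = L0 \<and> mexp L0 = A"
    using spectral_sym[OF sL0] spectral_exp[OF sL0] a0 assms(2) A by simp
  have U: "L = L0" if hL: "transpose L = L \<and> mexp L = A" for L
  proof -
    obtain l m x y where sL: "spectral L l m x y" using spectral_exists[of L] hL by blast
    have ox: "norm x = 1" "norm y = 1" "inner x y = 0" using spectral_onb[OF sL] by auto
    have sA: "spectral A (exp l) (exp m) x y"
      using hL spectral_exp[OF sL] ox sL by (simp add: spectral_def)
    from spectral_unique[OF sA assms(1)] have el: "exp l = a" "exp m = b" by auto
    then have lm: "l = ln a" "m = ln b" by auto
    have L: "L = l *\<^sub>R outer x + m *\<^sub>R outer y" using sL by (simp add: spectral_def)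
    show ?thesis
    proof (cases "b < a")
      case True
      have px: "outer x = outer p" using spectral_proj[OF sA] spectral_proj[OF assms(1) True] el True by simp
      have "outer y = outer q" using onb_sum[OF ox] onb_sum[OF o] px
        by (metis add_left_cancel)
      then show ?thesis unfolding L L0_def lm px by simp
    next
      case False
      then have "a = b" using ba by simp
      then have "l = m" using lm by simp
      have "L = m *\<^sub>R (outer x + outer y)" unfolding L \<open>l = m\<close> by (simp add: scaleR_add_right)
      also have "... = ln a *\<^sub>R (outer p + outer q)" unfolding onb_sum[OF ox] onb_sum[OF o] lm \<open>a = b\<close> ..
      also have "... = L0" unfolding L0_def \<open>a = b\<close> by (simp add: scaleR_add_right)
      finally show ?thesis .
    qed
  qed
  show ?thesis unfolding mlog_def L0_def[symmetric]
  proof (rule the_equality)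
    show "transpose L0 = L0 \<and> mexp L0 = A" using P .
    show "\<And>L. transpose L = L \<and> mexp L = A \<Longrightarrow> L = L0" using U by blast
  qed
qed



lemma E_split:
  assumes "k < (n::nat)"
  shows "mset (map lam [0..<n] @ map mu [0..<n])
       = add_mset (lam k) (mset (map lam [0..<k] @ map lam [Suc k..<n] @ map mu [0..<n]))"
proof -
  have "[0..<n] = [0..<k] @ k # [Suc k..<n]"
    using assms by (metis le_add1 le_add_same_cancel1 less_imp_add_positive upt_add_eq_append upt_conv_Cons)
  then show ?thesis by simp
qed

lemma E_facts:
  fixes lam mu :: "nat \<Rightarrow> real"
  assumes kn: "k < n" and ml: "\<forall>i<n. mu i \<le> lam i" and lk: "lam k = Max (set_mset (mset (map lam [0..<n] @ map mu [0..<n])))"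
  defines "E \<equiv> mset (map lam [0..<n] @ map mu [0..<n])"
  defines "l2 \<equiv> Max (set_mset (E - {#lam k#}))"
  shows "\<forall>i<n. lam i \<le> lam k \<and> mu i \<le> lam k"
    and "\<forall>i<n. i \<noteq> k \<longrightarrow> lam i \<le> l2"
    and "\<forall>i<n. mu i \<le> l2"
    and "l2 = mu k \<or> (\<exists>j<n. j \<noteq> k \<and> lam j = l2)"
    and "l2 \<le> lam k"
    and "count E (lam k) = 1 \<longleftrightarrow> l2 < lam k"
proof -
  define R where "R = mset (map lam [0..<k] @ map lam [Suc k..<n] @ map mu [0..<n])"
  have ER: "E = add_mset (lam k) R" unfolding E_def R_def using E_split[OF kn] .
  have R: "E - {#lam k#} = R" unfolding ER by (rule add_mset_remove_trivial)
  have memR: "x \<in> set_mset R \<longleftrightarrow> (\<exists>i<n. i \<noteq> k \<and> x = lam i) \<or> (\<exists>i<n. x = mu i)" for x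
  proof
    assume "x \<in> set_mset R"
    then have "x \<in> lam ` {0..<k} \<or> x \<in> lam ` {Suc k..<n} \<or> x \<in> mu ` {0..<n}"
      unfolding R_def by simp
    then show "(\<exists>i<n. i \<noteq> k \<and> x = lam i) \<or> (\<exists>i<n. x = mu i)"
    proof (elim disjE)
      assume "x \<in> lam ` {0..<k}"
      then obtain i where "i < k" "x = lam i" by auto
      then show ?thesis using kn by (intro disjI1 exI[of _ i]) simp
    next
      assume "x \<in> lam ` {Suc k..<n}"
      then obtain i where "Suc k \<le> i" "i < n" "x = lam i" by auto
      then show ?thesis by (intro disjI1 exI[of _ i]) simp
    next
      assume "x \<in> mu ` {0..<n}"
      then obtain i where "i < n" "x = mu i" by auto
      then show ?thesis by (intro disjI2 exI[of _ i]) simp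
    qed
  next
    assume "(\<exists>i<n. i \<noteq> k \<and> x = lam i) \<or> (\<exists>i<n. x = mu i)"
    then show "x \<in> set_mset R"
    proof
      assume "\<exists>i<n. i \<noteq> k \<and> x = lam i"
      then obtain i where i: "i < n" "i \<noteq> k" "x = lam i" by blast
      show ?thesis
      proof (cases "i < k")
        case True then show ?thesis unfolding R_def using i by auto
      next
        case False then have "Suc k \<le> i" using i by simp
        then show ?thesis unfolding R_def using i by auto
      qed
    next
      assume "\<exists>i<n. x = mu i"
      then show ?thesis unfolding R_def by auto
    qed
  qed
  have memE: "x \<in> set_mset E \<longleftrightarrow> (\<exists>i<n. x = lam i) \<or> (\<exists>i<n. x = mu i)" for x
    unfolding E_def by auto
  have finE: "finite (set_mset E)" by simp
  have finR: "finite (set_mset R)" by simp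
  have RneE: "set_mset R \<noteq> {}" using memR kn by blast
  have l2R: "l2 \<in> set_mset R" unfolding l2_def R using Max_in[OF finR RneE] .
  have l2ge: "y \<le> l2" if "y \<in> set_mset R" for y unfolding l2_def R using Max_ge[OF finR that] .
  have l1ge: "y \<le> lam k" if "y \<in> set_mset E" for y unfolding lk using Max_ge[OF finE that] E_def by simp
  show "\<forall>i<n. lam i \<le> lam k \<and> mu i \<le> lam k" using l1ge memE by blast
  show "\<forall>i<n. i \<noteq> k \<longrightarrow> lam i \<le> l2" using l2ge memR by blast
  show mu: "\<forall>i<n. mu i \<le> l2" using l2ge memR by blast
  have l2E: "l2 \<in> set_mset E" using l2R ER by simp
  show l21: "l2 \<le> lam k" using l1ge[OF l2E] .
  show "l2 = mu k \<or> (\<exists>j<n. j \<noteq> k \<and> lam j = l2)"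
  proof -
    from l2R memR consider (a) "\<exists>i<n. i \<noteq> k \<and> l2 = lam i" | (b) "\<exists>i<n. l2 = mu i" by blast
    then show ?thesis
    proof cases
      case a then show ?thesis by auto
    next
      case b
      then obtain i where i: "i < n" "l2 = mu i" by blast
      show ?thesis
      proof (cases "i = k")
        case True then show ?thesis using i by simp
      next
        case False
        have "lam i \<le> l2" using l2ge memR i False by blast
        moreover have "mu i \<le> lam i" using i ml by blast
        ultimately show ?thesis using i False by auto
      qed
    qed
  qed
  show "count E (lam k) = 1 \<longleftrightarrow> l2 < lam k"
  proof -
    have "count E (lam k) = 1 \<longleftrightarrow> lam k \<notin> set_mset R" unfolding ER by (simp add: count_eq_zero_iff)
    also have "... \<longleftrightarrow> l2 < lam k"
    proof
      assume "lam k \<notin> set_mset R" then show "l2 < lam k" using l2R l21 by (cases "l2 = lam k") auto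
    next
      assume "l2 < lam k" then show "lam k \<notin> set_mset R" using l2ge by force
    qed
    finally show ?thesis .
  qed
qed


lemma tr_zero: "transpose (0::mat2) = 0"
  unfolding mat2_eq_iff by (simp add: transpose_def)

lemma tr_sum: "transpose (\<Sum>i<(n::nat). (M i::mat2)) = (\<Sum>i<n. transpose (M i))"
  by (induction n) (simp_all add: tr_add tr_zero)

lemma mv_sum: "(\<Sum>i<(n::nat). (M i::mat2)) *v x = (\<Sum>i<n. M i *v x)"
  by (induction n) (simp_all add: matrix_vector_mult_add_rdistrib)

lemma sq_inner_le1:
  fixes a b :: "real^2"
  assumes "norm a = 1" "norm b = 1"
  shows "(inner a b)^2 \<le> 1"
proof -
  have "\<bar>inner a b\<bar> \<le> 1" using Cauchy_Schwarz_ineq2[of a b] assms by simp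
  then have "\<bar>inner a b\<bar>^2 \<le> 1" by (intro power_le_one) auto
  then show ?thesis by simp
qed

lemma norm_mat2_le: "norm (M::mat2) \<le> \<bar>M$1$1\<bar> + \<bar>M$1$2\<bar> + \<bar>M$2$1\<bar> + \<bar>M$2$2\<bar>"
proof -
  have "norm M \<le> norm (M$1) + norm (M$2)"
  proof -
    have "norm M = L2_set (\<lambda>i. norm (M$i)) UNIV" by (rule norm_vec_def)
    also have "... \<le> sum (\<lambda>i. norm (M$i)) UNIV" by (rule L2_set_le_sum) simp
    also have "... = norm (M$1) + norm (M$2)" by (rule sum_2)
    finally show ?thesis .
  qed
  also have "norm (M$1) \<le> \<bar>M$1$1\<bar> + \<bar>M$1$2\<bar>" using norm_le_l1_cart[of "M$1"] by (simp add: sum_2)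
  also have "norm (M$2) \<le> \<bar>M$2$1\<bar> + \<bar>M$2$2\<bar>" using norm_le_l1_cart[of "M$2"] by (simp add: sum_2)
  finally show ?thesis by simp
qed

lemma norm_outer_le: assumes "norm (p::real^2) = 1" shows "norm (outer p) \<le> 4"
proof -
  have c: "\<bar>p$i\<bar> \<le> 1" for i using component_le_norm_cart[of p i] assms by simp
  have "\<bar>p$i * p$j\<bar> \<le> 1" for i j using c[of i] c[of j] by (simp add: abs_mult mult_le_one)
  then show ?thesis using norm_mat2_le[of "outer p"] by (smt (verit) outer_nth)
qed

lemma geom_alg:
  fixes a b c s :: real
  assumes "a^2 + b^2 = 1" "c^2 + s^2 = 1"
  shows "s^2 / 2 \<le> a^2 + (c*a + s*b)^2"
proof -
  have "a^2 + (c*a + s*b)^2 - s^2/2 = a^2 * s^2 / 2 + 2 * (c*a + s*b/2)^2"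
  proof -
    have "a^2 + (c*a + s*b)^2 - s^2/2 - (a^2 * s^2 / 2 + 2 * (c*a + s*b/2)^2)
        = a^2 * (1 - c^2 - s^2) + s^2 / 2 * (a^2 + b^2 - 1)"
      by (simp add: field_simps power2_eq_square)
    also have "... = 0" using assms by simp
    finally show ?thesis by simp
  qed
  moreover have "0 \<le> a^2 * s^2 / 2 + 2 * (c*a + s*b/2)^2" by simp
  ultimately show ?thesis by linarith
qed

lemma geom:
  fixes u v w x :: "real^2"
  assumes o: "norm u = 1" "norm v = 1" "inner u v = 0" and w: "norm w = 1" and x: "norm x = 1"
  shows "(inner v w)^2 / 2 \<le> (inner u x)^2 + (inner w x)^2"
proof -
  have wd: "w = (inner u w) *\<^sub>R u + (inner v w) *\<^sub>R v" using onb_decomp[OF o] .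
  have wx: "inner w x = (inner u w) * inner u x + (inner v w) * inner v x"
    by (subst wd) (simp add: inner_add_left)
  have ab: "(inner u x)^2 + (inner v x)^2 = 1" using onb_qf[OF o, of x] x by simp
  have cs: "(inner u w)^2 + (inner v w)^2 = 1" using onb_qf[OF o, of w] w by simp
  show ?thesis unfolding wx using geom_alg[OF ab cs] .
qed

lemma not_aligned_cross:
  fixes u v w :: "real^2"
  assumes o: "norm u = 1" "norm v = 1" "inner u v = 0" and w: "norm w = 1" and na: "\<not> aligned w u"
  shows "inner v w \<noteq> 0"
proof
  assume s: "inner v w = 0"
  have wd: "w = (inner u w) *\<^sub>R u" using onb_decomp[OF o, of w] s by simp
  have "\<bar>inner u w\<bar> = 1" using arg_cong[OF wd, of norm] w o by simp
  then have "inner u w = 1 \<or> inner u w = -1" by linarith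
  then have "w = u \<or> w = - u" using wd by auto
  then show False using na unfolding aligned_def by blast
qed

lemma lim_const_div: "((\<lambda>t::real. l + C / t) \<longlongrightarrow> l) at_top"
  by real_asymp

lemma lim_exp_neg: "(c::real) < 0 \<Longrightarrow> ((\<lambda>t. exp (t * c)) \<longlongrightarrow> 0) at_top"
  by real_asymp

lemma tendsto_scaleR_bounded_zero:
  fixes h :: "'a \<Rightarrow> 'b::real_normed_vector"
  assumes g: "(g \<longlongrightarrow> 0) F" and B: "\<forall>\<^sub>F x in F. norm (h x) \<le> B"
  shows "((\<lambda>x. g x *\<^sub>R h x) \<longlongrightarrow> 0) F"
proof -
  have "((\<lambda>x. \<bar>g x\<bar> * B) \<longlongrightarrow> 0 * B) F" using g by (intro tendsto_mult tendsto_rabs_zero) auto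
  then have l: "((\<lambda>x. \<bar>g x\<bar> * B) \<longlongrightarrow> 0) F" by simp
  have "\<forall>\<^sub>F x in F. norm (g x *\<^sub>R h x) \<le> \<bar>g x\<bar> * B"
    using B by eventually_elim (simp add: mult_left_mono)
  then have "((\<lambda>x. norm (g x *\<^sub>R h x)) \<longlongrightarrow> 0) F"
    by (intro tendsto_sandwich[OF _ _ tendsto_const l]) auto
  then show ?thesis by (rule tendsto_norm_zero_iff[THEN iffD1])
qed

lemma outer_of_spectral_eq:
  assumes "spectral A l m u v" "spectral A l m u' v'" "m < l"
  shows "outer u = outer u'" "outer v = outer v'"
proof -
  show ou: "outer u = outer u'" using spectral_proj[OF assms(1,3)] spectral_proj[OF assms(2,3)] by simp
  have "outer u + outer v = outer u' + outer v'"
    using onb_sum spectral_onb[OF assms(1)] spectral_onb[OF assms(2)] by metis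
  then show "outer v = outer v'" using ou by simp
qed

lemma ln_sandwich:
  fixes f :: "real \<Rightarrow> real"
  assumes c1: "0 < c1" and b: "\<And>t. 0 < t \<Longrightarrow> c1 * exp (t*l) \<le> f t \<and> f t \<le> c2 * exp (t*l)"
  shows "((\<lambda>t. ln (f t) / t) \<longlongrightarrow> l) at_top"
proof (rule tendsto_sandwich[OF _ _ lim_const_div[of l "ln c1"] lim_const_div[of l "ln c2"]])
  show "\<forall>\<^sub>F t in at_top. l + ln c1 / t \<le> ln (f t) / t"
    using eventually_gt_at_top[of 0]
  proof eventually_elim
    case (elim t)
    have pos: "0 < c1 * exp (t*l)" using c1 by simp
    have "ln (c1 * exp(t*l)) \<le> ln (f t)" using b[OF elim] pos by (subst ln_le_cancel_iff) auto
    then have "ln c1 + t*l \<le> ln (f t)" using c1 by (simp add: ln_mult)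
    then have "(ln c1 + t*l)/t \<le> ln (f t)/t" using elim by (simp add: divide_right_mono)
    moreover have "(ln c1 + t*l)/t = l + ln c1 / t" using elim by (simp add: field_simps)
    ultimately show ?case by simp
  qed
  show "\<forall>\<^sub>F t in at_top. ln (f t) / t \<le> l + ln c2 / t"
    using eventually_gt_at_top[of 0]
  proof eventually_elim
    case (elim t)
    have pos: "0 < f t" using b[OF elim] c1 by (smt (verit) exp_gt_zero mult_pos_pos)
    have c2: "0 < c2" using b[OF elim] c1 by (smt (verit) exp_gt_zero mult_le_cancel_right)
    have "ln (f t) \<le> ln (c2 * exp(t*l))" using b[OF elim] pos c2 by (subst ln_le_cancel_iff) auto
    then have "ln (f t) \<le> ln c2 + t*l" using c2 by (simp add: ln_mult)
    then have "ln (f t)/t \<le> (ln c2 + t*l)/t" using elim by (simp add: divide_right_mono)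
    moreover have "(ln c2 + t*l)/t = l + ln c2 / t" using elim by (simp add: field_simps)
    ultimately show ?case by simp
  qed
qed

lemma core:
  fixes n k :: nat and X :: "nat \<Rightarrow> mat2" and lam mu :: "nat \<Rightarrow> real" and u v :: "nat \<Rightarrow> real^2"
  assumes spec: "\<forall>i<n. spectral (X i) (lam i) (mu i) (u i) (v i)"
    and gen: "generic_bases n u" and kn: "k < n"
    and lk: "lam k = Max (set_mset (mset (map lam [0..<n] @ map mu [0..<n])))"
  shows "has_Sup_LE n X (if count (mset (map lam [0..<n] @ map mu [0..<n])) (lam k) = 1
           then lam k *\<^sub>R outer (u k) + Max (set_mset (mset (map lam [0..<n] @ map mu [0..<n]) - {#lam k#})) *\<^sub>R outer (v k)
           else lam k *\<^sub>R mat 1)"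
proof -
  define E where "E = mset (map lam [0..<n] @ map mu [0..<n])"
  define l1 where "l1 = lam k"
  define l2 where "l2 = Max (set_mset (E - {#lam k#}))"
  have ml: "\<forall>i<n. mu i \<le> lam i" using spec by (simp add: spectral_def)
  note EF = E_facts[OF kn ml lk]
  have F1: "\<forall>i<n. lam i \<le> l1 \<and> mu i \<le> l1" using EF(1) unfolding l1_def .
  have F2: "\<forall>i<n. i \<noteq> k \<longrightarrow> lam i \<le> l2" using EF(2) unfolding l2_def E_def .
  have F3: "\<forall>i<n. mu i \<le> l2" using EF(3) unfolding l2_def E_def .
  have F4: "l2 = mu k \<or> (\<exists>j<n. j \<noteq> k \<and> lam j = l2)" using EF(4) unfolding l2_def E_def .
  have F5: "l2 \<le> l1" using EF(5) unfolding l2_def E_def l1_def .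
  have F6: "count E l1 = 1 \<longleftrightarrow> l2 < l1" using EF(6) unfolding l2_def E_def l1_def .
  have onb: "norm (u i) = 1" "norm (v i) = 1" "inner (u i) (v i) = 0" if "i < n" for i
    using spec that spectral_onb by blast+
  define S where "S t = (\<Sum>i<n. exp (t * lam i) *\<^sub>R outer (u i) + exp (t * mu i) *\<^sub>R outer (v i))" for t
  have mexpS: "(\<Sum>i<n. mexp (t *\<^sub>R X i)) = S t" if "0 \<le> t" for t
    unfolding S_def
  proof (rule sum.cong[OF refl])
    fix i assume "i \<in> {..<n}"
    then have "spectral (t *\<^sub>R X i) (t * lam i) (t * mu i) (u i) (v i)" using spectral_scale spec that by auto
    then show "mexp (t *\<^sub>R X i) = exp (t * lam i) *\<^sub>R outer (u i) + exp (t * mu i) *\<^sub>R outer (v i)"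
      by (rule spectral_exp)
  qed
  have symS: "transpose (S t) = S t" for t
    unfolding S_def tr_sum by (simp add: tr_add transpose_scalar outer_transpose)
  have qfS: "inner x (S t *v x) = (\<Sum>i<n. exp (t*lam i) * (inner (u i) x)^2 + exp (t*mu i) * (inner (v i) x)^2)" for t x
    unfolding S_def mv_sum inner_sum_right
    by (simp add: matrix_vector_mult_add_rdistrib mv_scale inner_add_right outer_qf)
  have "\<forall>t. \<exists>z. spectral (S t) (fst z) (fst (snd z)) (fst (snd (snd z))) (snd (snd (snd z)))"
  proof
    fix t
    obtain a b pp qq where "spectral (S t) a b pp qq" using spectral_exists[OF symS[of t]] by blast
    then show "\<exists>z. spectral (S t) (fst z) (fst (snd z)) (fst (snd (snd z))) (snd (snd (snd z)))"
      by (intro exI[of _ "(a,b,pp,qq)"]) simp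
  qed
  from choice[OF this] obtain Z where Z: "\<forall>t. spectral (S t) (fst (Z t)) (fst (snd (Z t))) (fst (snd (snd (Z t)))) (snd (snd (snd (Z t))))"
    by blast
  define al where "al t = fst (Z t)" for t
  define be where "be t = fst (snd (Z t))" for t
  define p where "p t = fst (snd (snd (Z t)))" for t
  define q where "q t = snd (snd (snd (Z t)))" for t
  have sp: "spectral (S t) (al t) (be t) (p t) (q t)" for t using Z unfolding al_def be_def p_def q_def by blast
  have opq: "norm (p t) = 1" "norm (q t) = 1" "inner (p t) (q t) = 0" for t using spectral_onb[OF sp] by auto
  have beal: "be t \<le> al t" for t using sp by (simp add: spectral_def)
  define T where "T t = (\<Sum>i<n. exp (t * lam i) + exp (t * mu i))" for t
  define e1 :: "real^2" where "e1 = vector [1,0]"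
  define e2 :: "real^2" where "e2 = vector [0,1]"
  have ine: "inner w e1 = w$1" "inner w e2 = w$2" for w unfolding e1_def e2_def inner2 by simp_all
  have ab_T: "al t + be t = T t" for t
  proof -
    have "inner e1 (S t *v e1) + inner e2 (S t *v e2) = al t * ((p t$1)^2 + (p t$2)^2) + be t * ((q t$1)^2 + (q t$2)^2)"
      unfolding spectral_qf[OF sp] ine by (simp add: algebra_simps)
    also have "... = al t + be t" using opq[of t] unfolding unit2 by simp
    finally have 1: "inner e1 (S t *v e1) + inner e2 (S t *v e2) = al t + be t" .
    have "inner e1 (S t *v e1) + inner e2 (S t *v e2)
       = (\<Sum>i<n. exp (t*lam i) * ((u i$1)^2 + (u i$2)^2) + exp (t*mu i) * ((v i$1)^2 + (v i$2)^2))"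
      unfolding qfS ine sum.distrib[symmetric] by (intro sum.cong) (simp_all add: algebra_simps)
    also have "... = T t" unfolding T_def
    proof (intro sum.cong refl)
      fix i assume "i \<in> {..<n}"
      then have "(u i$1)^2 + (u i$2)^2 = 1" "(v i$1)^2 + (v i$2)^2 = 1" using onb unit2 by auto
      then show "exp (t*lam i) * ((u i$1)^2 + (u i$2)^2) + exp (t*mu i) * ((v i$1)^2 + (v i$2)^2)
          = exp (t * lam i) + exp (t * mu i)" by simp
    qed
    finally show ?thesis using 1 by simp
  qed
  have n0: "0 < n" using kn by simp
  have T_le: "T t \<le> 2 * n * exp (t * l1)" if "0 \<le> t" for t
  proof -
    have "T t \<le> of_nat (card {..<n}) * (2 * exp (t * l1))"
      unfolding T_def
    proof (rule sum_bounded_above)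
      fix i assume "i \<in> {..<n}"
      then have "lam i \<le> l1" "mu i \<le> l1" using F1 by auto
      then have "exp (t * lam i) \<le> exp (t * l1)" "exp (t * mu i) \<le> exp (t * l1)"
        using that by (simp_all add: mult_left_mono)
      then show "exp (t*lam i) + exp (t*mu i) \<le> 2 * exp (t * l1)" by linarith
    qed
    then show ?thesis by simp
  qed
  have T_ge: "exp (t * l1) \<le> T t" for t
  proof -
    have "exp (t*lam k) + exp (t*mu k) \<le> T t" unfolding T_def
      by (rule member_le_sum) (use kn in \<open>auto intro: add_nonneg_nonneg\<close>)
    then show ?thesis unfolding l1_def by (smt (verit) exp_gt_zero)
  qed
  have be_le: "be t \<le> 2 * n * exp (t * l2)" if "0 \<le> t" for t
  proof -
    have "be t \<le> inner (v k) (S t *v v k)" using spectral_qf_bounds(2)[OF sp onb(2)[OF kn]] .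
    also have "... \<le> of_nat (card {..<n}) * (2 * exp (t * l2))"
      unfolding qfS
    proof (rule sum_bounded_above)
      fix i assume i: "i \<in> {..<n}"
      have s1: "(inner (u i) (v k))^2 \<le> 1" "(inner (v i) (v k))^2 \<le> 1"
        using sq_inner_le1 onb i kn by auto
      have a: "exp (t*lam i) * (inner (u i) (v k))^2 \<le> exp (t*l2)"
      proof (cases "i = k")
        case True then show ?thesis using onb(3)[OF kn] by simp
      next
        case False
        then have "lam i \<le> l2" using F2 i by auto
        then have "exp (t * lam i) \<le> exp (t * l2)" using that by (simp add: mult_left_mono)
        from mult_mono[OF this s1(1)] show ?thesis by simp
      qed
      have "mu i \<le> l2" using F3 i by auto
      then have "exp (t * mu i) \<le> exp (t * l2)" using that by (simp add: mult_left_mono)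
      from mult_mono[OF this s1(2)] have b: "exp (t*mu i) * (inner (v i) (v k))^2 \<le> exp (t*l2)" by simp
      show "exp (t*lam i) * (inner (u i) (v k))^2 + exp (t*mu i) * (inner (v i) (v k))^2 \<le> 2 * exp (t * l2)"
        using a b by simp
    qed
    finally show ?thesis by simp
  qed
  define f where "f t i = exp (t*lam i) * (inner (u i) (q t))^2 + exp (t*mu i) * (inner (v i) (q t))^2" for t i
  have be_eq: "be t = (\<Sum>i<n. f t i)" for t
    using spectral_qf_u(2)[OF sp] unfolding qfS f_def by simp
  have f_nn: "0 \<le> f t i" for t i unfolding f_def by simp
  have lk2: "exp (t * l2) \<le> exp (t * lam k)" if "0 \<le> t" for t
    using F5 that unfolding l1_def by (simp add: mult_left_mono)
  obtain kap where kap: "0 < kap" "\<And>t. 0 \<le> t \<Longrightarrow> kap * exp (t * l2) \<le> be t"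
  proof (cases "l2 = mu k")
    case True
    have "1 * exp (t * l2) \<le> be t" if "0 \<le> t" for t
    proof -
      have "f t k \<le> be t" unfolding be_eq by (rule member_le_sum) (use kn f_nn in auto)
      moreover have "exp (t * l2) * ((inner (u k) (q t))^2 + (inner (v k) (q t))^2) \<le> f t k"
        unfolding f_def True using lk2[OF that] True by (simp add: distrib_left mult_right_mono)
      moreover have "(inner (u k) (q t))^2 + (inner (v k) (q t))^2 = 1"
        using onb_qf[OF onb[OF kn], of "q t"] opq by simp
      ultimately show ?thesis by simp
    qed
    then show ?thesis using that[of 1] by simp
  next
    case False
    then obtain j where j: "j < n" "j \<noteq> k" "lam j = l2" using F4 by blast
    define s where "s = inner (v k) (u j)"
    have na: "\<not> aligned (u j) (u k)" using gen j kn unfolding generic_bases_def by blast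
    have s0: "s \<noteq> 0" unfolding s_def using not_aligned_cross[OF onb[OF kn] onb(1)[OF j(1)] na] .
    have "s^2 / 2 * exp (t * l2) \<le> be t" if "0 \<le> t" for t
    proof -
      have "(\<Sum>i\<in>{k,j}. f t i) \<le> (\<Sum>i<n. f t i)"
        by (rule sum_mono2) (use kn j f_nn in auto)
      moreover have "(\<Sum>i\<in>{k,j}. f t i) = f t k + f t j" using j by simp
      moreover have "exp (t*lam k) * (inner (u k) (q t))^2 \<le> f t k" unfolding f_def by simp
      moreover have "exp (t*l2) * (inner (u j) (q t))^2 \<le> f t j" unfolding f_def using j(3) by simp
      moreover have "exp (t * l2) * (inner (u k) (q t))^2 \<le> exp (t*lam k) * (inner (u k) (q t))^2"
        using lk2[OF that] by (simp add: mult_right_mono)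
      moreover have sq: "s^2/2 \<le> (inner (u k) (q t))^2 + (inner (u j) (q t))^2"
        unfolding s_def using geom[OF onb[OF kn] onb(1)[OF j(1)] opq(2)] .
      then have "s^2/2 * exp (t * l2) \<le> exp (t * l2) * (inner (u k) (q t))^2 + exp (t * l2) * (inner (u j) (q t))^2"
      proof -
        from mult_right_mono[OF sq, of "exp (t * l2)"]
        have "s^2/2 * exp (t * l2) \<le> ((inner (u k) (q t))^2 + (inner (u j) (q t))^2) * exp (t * l2)" by simp
        then show ?thesis by (simp add: algebra_simps)
      qed
      ultimately show ?thesis unfolding be_eq by linarith
    qed
    moreover have "0 < s^2 / 2" using s0 by simp
    ultimately show ?thesis using that by blast
  qed
  have be_pos: "0 < be t" if "0 \<le> t" for t using kap(2)[OF that] kap(1)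
    by (smt (verit) exp_gt_zero mult_pos_pos)
  have al_b: "1/2 * exp (t * l1) \<le> al t \<and> al t \<le> 2 * n * exp (t * l1)" if "0 < t" for t
    using ab_T[of t] T_le[of t] T_ge[of t] beal[of t] be_pos[of t] that by simp
  have be_b: "kap * exp (t * l2) \<le> be t \<and> be t \<le> 2 * n * exp (t * l2)" if "0 < t" for t
    using kap(2)[of t] be_le[of t] that by simp
  have Lal: "((\<lambda>t. ln (al t) / t) \<longlongrightarrow> l1) at_top"
    by (rule ln_sandwich[of "1/2" _ _ "2*n"]) (use al_b in auto)
  have Lbe: "((\<lambda>t. ln (be t) / t) \<longlongrightarrow> l2) at_top"
    by (rule ln_sandwich[OF kap(1)]) (use be_b in auto)
  define F where "F t = (ln (be t) / t) *\<^sub>R mat 1 + (ln (al t)/t - ln (be t)/t) *\<^sub>R outer (p t)" for t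
  have evF: "\<forall>\<^sub>F t in at_top. F t = (1/t) *\<^sub>R mlog (\<Sum>i<n. mexp (t *\<^sub>R X i))"
    using eventually_gt_at_top[of 0]
  proof eventually_elim
    case (elim t)
    have m: "mlog (\<Sum>i<n. mexp (t *\<^sub>R X i)) = ln (al t) *\<^sub>R outer (p t) + ln (be t) *\<^sub>R outer (q t)"
      using mexpS[of t] elim mlog_spectral[OF sp be_pos[of t]] by simp
    have oq: "outer (q t) = mat 1 - outer (p t)" using onb_sum[OF opq[of t]] by (metis add_diff_cancel_left')
    show ?case unfolding F_def m oq
      by (simp add: algebra_simps scaleR_diff_right)
  qed
  have LSup: "(F \<longlongrightarrow> (if count E l1 = 1 then l1 *\<^sub>R outer (u k) + l2 *\<^sub>R outer (v k) else l1 *\<^sub>R mat 1)) at_top"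
  proof (cases "l2 < l1")
    case False
    then have eq: "l2 = l1" using F5 by simp
    have c: "count E l1 \<noteq> 1" using F6 False by simp
    have 1: "((\<lambda>t. (ln (be t)/t) *\<^sub>R (mat 1::mat2)) \<longlongrightarrow> l2 *\<^sub>R mat 1) at_top"
      by (rule tendsto_scaleR[OF Lbe tendsto_const])
    have d: "((\<lambda>t. ln (al t)/t - ln (be t)/t) \<longlongrightarrow> 0) at_top"
      using tendsto_diff[OF Lal Lbe] eq by simp
    have 2: "((\<lambda>t. (ln (al t)/t - ln (be t)/t) *\<^sub>R outer (p t)) \<longlongrightarrow> 0) at_top"
      by (rule tendsto_scaleR_bounded_zero[OF d, where B=4]) (simp add: norm_outer_le[OF opq(1)])
    have "(F \<longlongrightarrow> l2 *\<^sub>R mat 1 + 0) at_top" unfolding F_def by (rule tendsto_add[OF 1 2])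
    then show ?thesis using c eq by simp
  next
    case True
    have c: "count E l1 = 1" using F6 True by simp
    define ep where "ep t = exp (- (t * l1))" for t
    have ep0: "0 < ep t" for t unfolding ep_def by simp
    have gap: "\<forall>\<^sub>F t in at_top. be t < al t"
    proof -
      have "\<forall>\<^sub>F t in at_top. 0 < ln (al t)/t - ln (be t)/t"
        using tendsto_diff[OF Lal Lbe] True by (intro order_tendstoD(1)) auto
      then show ?thesis using eventually_gt_at_top[of 0]
      proof eventually_elim
        case (elim t)
        then have "ln (be t) < ln (al t)" by (simp add: divide_strict_right_mono_neg field_simps)
        then show ?case using be_pos[of t] beal[of t] elim by simp
      qed
    qed
    have evP: "\<forall>\<^sub>F t in at_top. (1 / (al t * ep t - be t * ep t)) *\<^sub>R (ep t *\<^sub>R S t - (be t * ep t) *\<^sub>R mat 1) = outer (p t)"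
      using gap
    proof eventually_elim
      case (elim t)
      have P: "outer (p t) = (1 / (al t - be t)) *\<^sub>R (S t - be t *\<^sub>R mat 1)" using spectral_proj[OF sp elim] .
      have a: "ep t *\<^sub>R S t - (be t * ep t) *\<^sub>R mat 1 = ep t *\<^sub>R (S t - be t *\<^sub>R mat 1)"
        by (simp add: scaleR_diff_right)
      have b: "al t * ep t - be t * ep t = (al t - be t) * ep t" by (simp add: algebra_simps)
      have "1 / ((al t - be t) * ep t) * ep t = 1 / (al t - be t)" using ep0[of t] by simp
      then show ?case unfolding P a b scaleR_scaleR by simp
    qed
    have lim_i: "((\<lambda>t. exp (t * (lam i - l1)) *\<^sub>R outer (u i) + exp (t * (mu i - l1)) *\<^sub>R outer (v i))
        \<longlongrightarrow> (if i = k then outer (u i) else 0)) at_top" if "i < n" for i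
    proof -
      have m: "mu i - l1 < 0" using F3 True that by force
      have 2: "((\<lambda>t. exp (t * (mu i - l1)) *\<^sub>R outer (v i)) \<longlongrightarrow> 0 *\<^sub>R outer (v i)) at_top"
        by (intro tendsto_scaleR lim_exp_neg[OF m] tendsto_const)
      have 1: "((\<lambda>t. exp (t * (lam i - l1)) *\<^sub>R outer (u i)) \<longlongrightarrow> (if i = k then outer (u i) else 0)) at_top"
      proof (cases "i = k")
        case True then show ?thesis unfolding l1_def by simp
      next
        case False
        then have "lam i - l1 < 0" using F2 \<open>l2 < l1\<close> that by force
        from tendsto_scaleR[OF lim_exp_neg[OF this] tendsto_const[of "outer (u i)"]]
        show ?thesis using False by simp
      qed
      show ?thesis using tendsto_add[OF 1 2] by simp
    qed
    have LS: "((\<lambda>t. ep t *\<^sub>R S t) \<longlongrightarrow> outer (u k)) at_top"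
    proof -
      have eq: "ep t *\<^sub>R S t = (\<Sum>i<n. exp (t * (lam i - l1)) *\<^sub>R outer (u i) + exp (t * (mu i - l1)) *\<^sub>R outer (v i))" for t
        unfolding S_def scaleR_sum_right
      proof (intro sum.cong refl)
        fix i
        have "ep t * exp (t * lam i) = exp (t * (lam i - l1))" "ep t * exp (t * mu i) = exp (t * (mu i - l1))"
          unfolding ep_def mult_exp_exp by (simp_all add: algebra_simps)
        then show "ep t *\<^sub>R (exp (t * lam i) *\<^sub>R outer (u i) + exp (t * mu i) *\<^sub>R outer (v i))
          = exp (t * (lam i - l1)) *\<^sub>R outer (u i) + exp (t * (mu i - l1)) *\<^sub>R outer (v i)"
          by (simp add: scaleR_add_right)
      qed
      have "((\<lambda>t. \<Sum>i<n. exp (t * (lam i - l1)) *\<^sub>R outer (u i) + exp (t * (mu i - l1)) *\<^sub>R outer (v i))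
          \<longlongrightarrow> (\<Sum>i<n. if i = k then outer (u i) else 0)) at_top"
        by (rule tendsto_sum) (use lim_i in auto)
      then show ?thesis unfolding eq using kn by simp
    qed
    have LT: "((\<lambda>t. T t * ep t) \<longlongrightarrow> 1) at_top"
    proof -
      have eq: "T t * ep t = (\<Sum>i<n. exp (t * (lam i - l1)) + exp (t * (mu i - l1)))" for t
        unfolding T_def sum_distrib_right
      proof (intro sum.cong refl)
        fix i
        have "exp (t * lam i) * ep t = exp (t * (lam i - l1))" "exp (t * mu i) * ep t = exp (t * (mu i - l1))"
          unfolding ep_def mult_exp_exp by (simp_all add: algebra_simps)
        then show "(exp (t * lam i) + exp (t * mu i)) * ep t = exp (t * (lam i - l1)) + exp (t * (mu i - l1))"
          by (simp add: distrib_right)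
      qed
      have li: "((\<lambda>t. exp (t * (lam i - l1)) + exp (t * (mu i - l1))) \<longlongrightarrow> (if i = k then 1 else 0)) at_top"
        if "i < n" for i
      proof -
        have m: "mu i - l1 < 0" using F3 True that by force
        have 1: "((\<lambda>t. exp (t * (lam i - l1))) \<longlongrightarrow> (if i = k then 1 else 0)) at_top"
        proof (cases "i = k")
          case True then show ?thesis unfolding l1_def by simp
        next
          case False
          then have "lam i - l1 < 0" using F2 \<open>l2 < l1\<close> that by force
          then show ?thesis using False lim_exp_neg by simp
        qed
        show ?thesis using tendsto_add[OF 1 lim_exp_neg[OF m]] by simp
      qed
      have "((\<lambda>t. \<Sum>i<n. exp (t * (lam i - l1)) + exp (t * (mu i - l1))) \<longlongrightarrow> (\<Sum>i<n. if i = k then 1 else 0)) at_top"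
        by (rule tendsto_sum) (use li in auto)
      then show ?thesis unfolding eq using kn by simp
    qed
    have Lbep: "((\<lambda>t. be t * ep t) \<longlongrightarrow> 0) at_top"
    proof (rule tendsto_sandwich[OF _ _ tendsto_const])
      show "\<forall>\<^sub>F t in at_top. 0 \<le> be t * ep t"
        using eventually_gt_at_top[of 0] by eventually_elim (use be_pos ep0 in \<open>auto intro: less_imp_le\<close>)
      show "\<forall>\<^sub>F t in at_top. be t * ep t \<le> 2 * n * exp (t * (l2 - l1))"
        using eventually_gt_at_top[of 0]
      proof eventually_elim
        case (elim t)
        have "be t * ep t \<le> 2 * n * exp (t * l2) * ep t" using be_le[of t] elim ep0[of t] by (simp add: mult_right_mono)
        also have "... = 2 * n * exp (t * (l2 - l1))" unfolding ep_def by (simp add: mult_exp_exp algebra_simps)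
        finally show ?case .
      qed
      have "l2 - l1 < 0" using True by simp
      from tendsto_mult[OF tendsto_const[of "2 * real n"] lim_exp_neg[OF this]]
      show "((\<lambda>t. 2 * n * exp (t * (l2 - l1))) \<longlongrightarrow> 0) at_top" by simp
    qed
    have Lden: "((\<lambda>t. al t * ep t - be t * ep t) \<longlongrightarrow> 1) at_top"
    proof -
      have eq: "al t * ep t - be t * ep t = T t * ep t - 2 * (be t * ep t)" for t
        using ab_T[of t] by (simp add: algebra_simps) (metis add_diff_cancel_right' distrib_right)
      show ?thesis unfolding eq using tendsto_diff[OF LT tendsto_mult[OF tendsto_const[of 2] Lbep]] by simp
    qed
    have "((\<lambda>t. (1 / (al t * ep t - be t * ep t)) *\<^sub>R (ep t *\<^sub>R S t - (be t * ep t) *\<^sub>R mat 1))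
        \<longlongrightarrow> (1 / 1) *\<^sub>R (outer (u k) - 0 *\<^sub>R mat 1)) at_top"
      by (intro tendsto_scaleR tendsto_divide tendsto_const tendsto_diff LS Lden Lbep) simp
    then have LP: "((\<lambda>t. outer (p t)) \<longlongrightarrow> outer (u k)) at_top"
      using Lim_transform_eventually[OF _ evP] by simp
    have "(F \<longlongrightarrow> l2 *\<^sub>R mat 1 + (l1 - l2) *\<^sub>R outer (u k)) at_top"
      unfolding F_def by (intro tendsto_add tendsto_scaleR Lbe tendsto_const tendsto_diff Lal LP)
    moreover have "l2 *\<^sub>R mat 1 + (l1 - l2) *\<^sub>R outer (u k) = l1 *\<^sub>R outer (u k) + l2 *\<^sub>R outer (v k)"
      unfolding onb_sum[OF onb[OF kn], symmetric] by (simp add: algebra_simps)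
    ultimately show ?thesis using c by simp
  qed
  have "((\<lambda>t. (1/t) *\<^sub>R mlog (\<Sum>i<n. mexp (t *\<^sub>R X i))) \<longlongrightarrow>
     (if count E l1 = 1 then l1 *\<^sub>R outer (u k) + l2 *\<^sub>R outer (v k) else l1 *\<^sub>R mat 1)) at_top"
    by (rule Lim_transform_eventually[OF LSup evF])
  then show ?thesis unfolding has_Sup_LE_def E_def l1_def l2_def .
qed

lemma count_unique_neq:
  assumes "k < n" "count (mset (map lam [0..<n] @ map mu [0..<n])) (lam k) = 1"
  shows "lam k \<noteq> mu k"
proof
  assume h: "lam k = mu k"
  define R where "R = mset (map lam [0..<k] @ map lam [Suc k..<n] @ map mu [0..<n])"
  have E: "mset (map lam [0..<n] @ map mu [0..<n]) = add_mset (lam k) R" unfolding R_def by (rule E_split[OF assms(1)])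
  have "mu k \<in># R" unfolding R_def using assms(1) by simp
  then have "lam k \<in># R" using h by simp
  then have c: "count R (lam k) \<noteq> 0" by (metis count_eq_zero_iff)
  have "count (add_mset (lam k) R) (lam k) = Suc (count R (lam k))" by simp
  then show False using assms(2) c unfolding E by simp
qed

theorem theorem5:
  fixes n :: nat and X :: "nat \<Rightarrow> mat2"
    and lam mu :: "nat \<Rightarrow> real" and u v :: "nat \<Rightarrow> real^2" and k :: nat
  assumes "n \<ge> 1"
    and "\<forall>i<n. spectral (X i) (lam i) (mu i) (u i) (v i)"
    and "k < n"
    and "lam k = Max (set_mset (mset (map lam [0..<n] @ map mu [0..<n])))"
  shows "let E = mset (map lam [0..<n] @ map mu [0..<n]);
             l1 = lam k;
             l2 = Max (set_mset (E - {#l1#}))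
         in has_Sup_RLE n X
              (if count E l1 = 1
               then l1 *\<^sub>R outer (u k) + l2 *\<^sub>R outer (v k)
               else l1 *\<^sub>R mat 1)"
proof -
  note spec = assms(2) and kn = assms(3) and lk = assms(4)
  define E where "E = mset (map lam [0..<n] @ map mu [0..<n])"
  define l2 where "l2 = Max (set_mset (E - {#lam k#}))"
  define tg where "tg = (if count E (lam k) = 1 then lam k *\<^sub>R outer (u k) + l2 *\<^sub>R outer (v k) else lam k *\<^sub>R mat 1)"
  have ml: "\<forall>i<n. mu i \<le> lam i" using spec by (simp add: spectral_def)
  have uniq: "mu k < lam k" if "count E (lam k) = 1"
    using count_unique_neq[OF kn that[unfolded E_def]] ml kn by force
  have main: "has_Sup_RLE n X tg"
  proof (cases "has_generic_bases n X")
    case True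
    then obtain l' m' u' v' where sp': "\<forall>i<n. spectral (X i) (l' i) (m' i) (u' i) (v' i)"
      and g: "generic_bases n u'" unfolding has_generic_bases_def by blast
    have eq: "l' i = lam i \<and> m' i = mu i" if "i < n" for i
      using spectral_unique[OF sp'[rule_format, OF that] spec[rule_format, OF that]] by simp
    have ml': "map l' [0..<n] = map lam [0..<n]" "map m' [0..<n] = map mu [0..<n]"
      using eq by (auto intro!: map_cong)
    have eqk: "l' k = lam k" using eq kn by simp
    have lk': "l' k = Max (set_mset (mset (map l' [0..<n] @ map m' [0..<n])))"
      unfolding ml' eqk by (rule lk)
    have C: "has_Sup_LE n X (if count E (lam k) = 1 then lam k *\<^sub>R outer (u' k) + l2 *\<^sub>R outer (v' k) else lam k *\<^sub>R mat 1)"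
      using core[OF sp' g kn lk'] unfolding ml' eqk E_def[symmetric] l2_def[symmetric] .
    have "(if count E (lam k) = 1 then lam k *\<^sub>R outer (u' k) + l2 *\<^sub>R outer (v' k) else lam k *\<^sub>R mat 1) = tg"
    proof (cases "count E (lam k) = 1")
      case True
      have s1: "spectral (X k) (lam k) (mu k) (u' k) (v' k)" using sp' eq kn by auto
      have s2: "spectral (X k) (lam k) (mu k) (u k) (v k)" using spec kn by auto
      show ?thesis using outer_of_spectral_eq[OF s1 s2 uniq[OF True]] True unfolding tg_def by simp
    next
      case False then show ?thesis unfolding tg_def by simp
    qed
    then show ?thesis using C True unfolding has_Sup_RLE_def by simp
  next
    case False
    have "\<forall>Xd :: real \<Rightarrow> nat \<Rightarrow> mat2.
              (\<forall>i<n. ((\<lambda>d. Xd d i) \<longlongrightarrow> X i) (at_right 0)) \<and>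
              (\<forall>d>0. \<forall>i<n. same_eigs (Xd d i) (X i)) \<and>
              (\<forall>d>0. has_generic_bases n (Xd d))
              \<longrightarrow> (\<exists>S'. (\<forall>d>0. has_Sup_LE n (Xd d) (S' d)) \<and> (S' \<longlongrightarrow> tg) (at_right 0))"
    proof (intro allI impI)
      fix Xd :: "real \<Rightarrow> nat \<Rightarrow> mat2"
      assume h: "(\<forall>i<n. ((\<lambda>d. Xd d i) \<longlongrightarrow> X i) (at_right 0)) \<and>
              (\<forall>d>0. \<forall>i<n. same_eigs (Xd d i) (X i)) \<and>
              (\<forall>d>0. has_generic_bases n (Xd d))"
      have "\<forall>d. \<exists>z. d > 0 \<longrightarrow> (\<forall>i<n. spectral (Xd d i) (lam i) (mu i) (fst z i) (snd z i)) \<and> generic_bases n (fst z)"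
      proof
        fix d :: real
        show "\<exists>z. d > 0 \<longrightarrow> (\<forall>i<n. spectral (Xd d i) (lam i) (mu i) (fst z i) (snd z i)) \<and> generic_bases n (fst z)"
        proof (cases "d > 0")
          case False then show ?thesis by simp
        next
          case True
          have hg: "has_generic_bases n (Xd d)" using h[THEN conjunct2, THEN conjunct2] True by simp
          obtain l'' m'' u'' v'' where s'': "\<forall>i<n. spectral (Xd d i) (l'' i) (m'' i) (u'' i) (v'' i)"
            and g'': "generic_bases n u''"
            using hg unfolding has_generic_bases_def by blast
          have "l'' i = lam i \<and> m'' i = mu i" if "i < n" for i
          proof -
            have "same_eigs (Xd d i) (X i)" using h[THEN conjunct2, THEN conjunct1] True that by simp
            then obtain a b x y x' y' where sa: "spectral (Xd d i) a b x y" and sb: "spectral (X i) a b x' y'"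
              unfolding same_eigs_def by blast
            show ?thesis using spectral_unique[OF sa s''[rule_format, OF that]]
                spectral_unique[OF sb spec[rule_format, OF that]] by simp
          qed
          then show ?thesis using s'' g'' by (intro exI[of _ "(u'', v'')"]) auto
        qed
      qed
      from choice[OF this] obtain Z where Z: "\<And>d. d > 0 \<Longrightarrow>
          (\<forall>i<n. spectral (Xd d i) (lam i) (mu i) (fst (Z d) i) (snd (Z d) i)) \<and> generic_bases n (fst (Z d))"
        by blast
      define S' where "S' d = (if count E (lam k) = 1 then lam k *\<^sub>R outer (fst (Z d) k) + l2 *\<^sub>R outer (snd (Z d) k) else lam k *\<^sub>R mat 1)" for d
      show "\<exists>S'. (\<forall>d>0. has_Sup_LE n (Xd d) (S' d)) \<and> (S' \<longlongrightarrow> tg) (at_right 0)"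
      proof (intro exI[of _ S'] conjI allI impI)
        fix d :: real assume d: "d > 0"
        show "has_Sup_LE n (Xd d) (S' d)"
          using core[OF conjunct1[OF Z[OF d]] conjunct2[OF Z[OF d]] kn lk]
          unfolding S'_def E_def[symmetric] l2_def[symmetric] .
      next
        show "(S' \<longlongrightarrow> tg) (at_right 0)"
        proof (cases "count E (lam k) = 1")
          case False
          then show ?thesis unfolding S'_def tg_def by simp
        next
          case True
          have mk: "mu k < lam k" using uniq[OF True] .
          define P where "P d = (1 / (lam k - mu k)) *\<^sub>R (Xd d k - mu k *\<^sub>R mat 1)" for d
          have evS: "\<forall>\<^sub>F d in at_right 0. lam k *\<^sub>R P d + l2 *\<^sub>R (mat 1 - P d) = S' d"
            using eventually_at_right_less[of 0]
          proof eventually_elim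
            case (elim d)
            have sd: "spectral (Xd d k) (lam k) (mu k) (fst (Z d) k) (snd (Z d) k)" using Z[OF elim] kn by blast
            have pu: "outer (fst (Z d) k) = P d" unfolding P_def using spectral_proj[OF sd mk] .
            have pv: "outer (snd (Z d) k) = mat 1 - P d"
              using onb_sum[OF spectral_onb[OF sd, THEN conjunct1] spectral_onb[OF sd, THEN conjunct2, THEN conjunct1]
                  spectral_onb[OF sd, THEN conjunct2, THEN conjunct2]] pu by (metis add_diff_cancel_left')
            show ?case unfolding S'_def using True pu pv by simp
          qed
          have sk: "spectral (X k) (lam k) (mu k) (u k) (v k)" using spec kn by auto
          have LP: "(P \<longlongrightarrow> outer (u k)) (at_right 0)"
            unfolding P_def spectral_proj[OF sk mk]
            using h kn by (intro tendsto_scaleR tendsto_const tendsto_diff) auto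
          have "((\<lambda>d. lam k *\<^sub>R P d + l2 *\<^sub>R (mat 1 - P d)) \<longlongrightarrow> lam k *\<^sub>R outer (u k) + l2 *\<^sub>R (mat 1 - outer (u k))) (at_right 0)"
            by (intro tendsto_add tendsto_scaleR tendsto_const tendsto_diff LP)
          moreover have "mat 1 - outer (u k) = outer (v k)"
            using onb_sum[OF spectral_onb[OF sk, THEN conjunct1] spectral_onb[OF sk, THEN conjunct2, THEN conjunct1]
                  spectral_onb[OF sk, THEN conjunct2, THEN conjunct2]] by (metis add_diff_cancel_left')
          ultimately have "((\<lambda>d. lam k *\<^sub>R P d + l2 *\<^sub>R (mat 1 - P d)) \<longlongrightarrow> tg) (at_right 0)"
            unfolding tg_def using True by simp
          then show ?thesis using Lim_transform_eventually[OF _ evS] by blast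
        qed
      qed
    qed
    then show ?thesis using False unfolding has_Sup_RLE_def by simp
  qed
  then show ?thesis unfolding Let_def tg_def l2_def E_def .
qed

end
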